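(* Let $H_X\in\mathbb{F}_2^{m_X\times n}$ and $H_Z\in\mathbb{F}_2^{m_Z\times n}$, and let $k=n-\mathrm{rank}(H_X)-\mathrm{rank}(H_Z)$. Let $P\ge1$ and let $\hat H_X\in\mathbb{F}_2^{Pm_X\times Pn}$, $\hat H_Z\in\mathbb{F}_2^{Pm_Z\times Pn}$ be obtained by replacing each nonzero entry of $H_X$ and $H_Z$ by some $P\times P$ permutation matrix and each zero entry by the $P\times P$ zero matrix, and assume $\hat H_X\hat H_Z^{\mathsf T}=0$ over $\mathbb{F}_2$. Let $\hat k=Pn-\mathrm{rank}(\hat H_X)-\mathrm{rank}(\hat H_Z)$. Then \[ \hat k\ge k+(P-1)(n-m_X-m_Z). \] In particular, if $n=m_X+m_Z$, then $\hat k\ge k$.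
   Context: All ranks are over $\mathbb{F}_2$. The permutation matrices used for different entries may differ. *)

theory Defs
  imports "HOL-Library.Z2" "Jordan_Normal_Form.DL_Rank" "HOL-Combinatorics.Permutations"
begin

definition rk :: "bit mat \<Rightarrow> nat" where
  "rk A = vec_space.rank (dim_row A) A"

definition is_perm_lift :: "nat \<Rightarrow> bit mat \<Rightarrow> bit mat \<Rightarrow> bool" where
  "is_perm_lift P H Hh \<longleftrightarrow>
     Hh \<in> carrier_mat (P * dim_row H) (P * dim_col H) \<and>
     (\<exists>\<sigma> :: nat \<Rightarrow> nat \<Rightarrow> nat \<Rightarrow> nat.
        \<forall>a < dim_row H. \<forall>b < dim_col H.
          (H $$ (a, b) \<noteq> 0 \<longrightarrow> \<sigma> a b permutes {..<P}) \<and>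
          (\<forall>r < P. \<forall>c < P.
             Hh $$ (a * P + r, b * P + c) =
               (if H $$ (a, b) = 0 then 0 else if \<sigma> a b r = c then 1 else 0)))"

end

theory Submission
  imports Defs
begin
lemma sum_blocks: "(\<Sum>i<k*(m::nat). f i) = (\<Sum>a<m. \<Sum>s<k. f (a*k+s)) "
proof (induction m)
  case 0 show ?case by simp
next
  case (Suc m)
  have e: "{..<k*Suc m} = {..<k*m} \<union> (\<lambda>s. m*k+s) ` {..<k}"
  proof (intro equalityI subsetI)
    fix x assume "x \<in> {..<k*Suc m}"
    then have x: "x < k*m + k" by simp
    show "x \<in> {..<k*m} \<union> (\<lambda>s. m*k+s) ` {..<k}"
    proof (cases "x < k*m")
      case True then show ?thesis by simp
    next
      case False
      then have "x = m*k + (x - m*k)" "x - m*k < k" using x by (simp_all add: mult.commute)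
      then show ?thesis by (metis UnI2 image_eqI lessThan_iff)
    qed
  next
    fix x assume "x \<in> {..<k*m} \<union> (\<lambda>s. m*k+s) ` {..<k}"
    then show "x \<in> {..<k*Suc m}"
    proof
      assume "x \<in> {..<k*m}" then show ?thesis by simp
    next
      assume "x \<in> (\<lambda>s. m*k+s) ` {..<k}"
      then obtain s where "s < k" "x = m*k+s" by auto
      then show ?thesis by (simp add: mult.commute)
    qed
  qed
  have inj: "inj_on (\<lambda>s. m*k+s) {..<k}" by (auto simp: inj_on_def)
  have d: "{..<k*m} \<inter> (\<lambda>s. m*k+s) ` {..<k} = {}" by (auto simp: mult.commute)
  have "(\<Sum>i<k*Suc m. f i) = (\<Sum>i<k*m. f i) + (\<Sum>s<k. f (m*k+s))"
    unfolding e by (simp add: sum.union_disjoint[OF _ _ d] sum.reindex[OF inj])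
  then show ?case using Suc by simp
qed
lemma rank_mult_right:
  fixes A :: "'a::field mat"
  assumes A: "A \<in> carrier_mat n k" and B: "B \<in> carrier_mat k nc"
  shows "vec_space.rank n (A * B) \<le> vec_space.rank k B"
proof -
  interpret N: vec_space "TYPE('a)" n .
  interpret K: vec_space "TYPE('a)" k .
  have AB: "A * B \<in> carrier_mat n nc" using A B by auto
  obtain S where max: "maximal S (\<lambda>T. T \<subseteq> set (cols (A * B)) \<and> N.lin_indpt T)"
    using maximal_exists[of "(\<lambda>T. T \<subseteq> set (cols (A * B)) \<and> N.lin_indpt T)" "card (set (cols (A * B)))" "{}"]
    by (meson List.finite_set card_mono empty_iff empty_subsetI N.finite_lin_indpt2 rev_finite_subset)
  have rk: "N.rank (A * B) = card S" using N.rank_card_indpt[OF AB max] .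
  have Ssub: "S \<subseteq> set (cols (A * B))" and Sind: "N.lin_indpt S" using max unfolding maximal_def by auto
  have finS: "finite S" using Ssub finite_subset by blast
  define g where "g s = col B (SOME j. j < nc \<and> s = col (A * B) j)" for s
  have g: "g s \<in> set (cols B) \<and> A *\<^sub>v g s = s" if "s \<in> S" for s
  proof -
    from that Ssub have "s \<in> set (cols (A * B))" by auto
    then obtain j where "j < length (cols (A * B))" "s = cols (A * B) ! j"
      by (auto simp: in_set_conv_nth)
    then have "j < nc" "s = col (A * B) j" using AB by auto
    then have "\<exists>j. j < nc \<and> s = col (A * B) j" by auto
    then have j: "(SOME j. j < nc \<and> s = col (A * B) j) < nc \<and> s = col (A * B) (SOME j. j < nc \<and> s = col (A * B) j)"
      by (rule someI_ex)
    show ?thesis unfolding g_def using j A B col_mult2[OF A B] by (auto simp: cols_def)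
  qed
  have inj: "inj_on g S" by (metis g inj_onI)
  define T where "T = g ` S"
  have cardT: "card T = card S" unfolding T_def using card_image[OF inj] .
  have Tsub: "T \<subseteq> set (cols B)" unfolding T_def using g by auto
  have Tcar: "T \<subseteq> carrier_vec k" using Tsub cols_dim[of B] B by auto
  have Scar: "S \<subseteq> carrier_vec n" using Ssub cols_dim[of "A * B"] A by auto
  have finT: "finite T" unfolding T_def using finS by auto
  have "K.lin_indpt T"
  proof
    assume "K.lin_dep T"
    then obtain a v where a: "K.lincomb a T = 0\<^sub>v k" and v: "v \<in> T" "a v \<noteq> 0"
      using K.finite_lin_dep[OF finT _ ] Tcar by auto
    obtain s0 where s0: "s0 \<in> S" "v = g s0" using v T_def by auto
    have "N.lincomb (a \<circ> g) S = 0\<^sub>v n"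
    proof (rule eq_vecI)
      show "dim_vec (N.lincomb (a \<circ> g) S) = dim_vec (0\<^sub>v n)"
        using N.lincomb_dim[OF finS Scar] by simp
      fix i assume "i < dim_vec (0\<^sub>v n)"
      then have i: "i < n" by simp
      have "N.lincomb (a \<circ> g) S $ i = (\<Sum>s\<in>S. a (g s) * s $ i)"
        using N.lincomb_index[OF i Scar] by simp
      also have "\<dots> = (\<Sum>s\<in>S. a (g s) * (\<Sum>j<k. A $$ (i, j) * g s $ j))"
      proof (rule sum.cong[OF refl])
        fix s assume s: "s \<in> S"
        have gs: "g s \<in> carrier_vec k" using g[OF s] Tcar T_def s by auto
        have "s $ i = (A *\<^sub>v g s) $ i" using g[OF s] by simp
        also have "\<dots> = (\<Sum>j<k. A $$ (i, j) * g s $ j)"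
          using A gs i by (simp add: mult_mat_vec_def scalar_prod_def lessThan_atLeast0)
        finally show "a (g s) * s $ i = a (g s) * (\<Sum>j<k. A $$ (i, j) * g s $ j)" by simp
      qed
      also have "\<dots> = (\<Sum>j<k. A $$ (i, j) * (\<Sum>s\<in>S. a (g s) * g s $ j))"
        by (simp add: sum_distrib_left sum_distrib_right mult_ac sum.swap[of _ S])
      also have "\<dots> = (\<Sum>j<k. A $$ (i, j) * (\<Sum>t\<in>T. a t * t $ j))"
        unfolding T_def by (simp add: sum.reindex[OF inj])
      also have "\<dots> = (\<Sum>j<k. A $$ (i, j) * (K.lincomb a T $ j))"
        using K.lincomb_index[OF _ Tcar] by simp
      also have "\<dots> = 0" using a by simp
      finally show "N.lincomb (a \<circ> g) S $ i = 0\<^sub>v n $ i" using i by simp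
    qed
    then have "N.lin_dep S"
      using N.lin_dep_crit[OF finS subset_refl _ s0(1), where a="a \<circ> g"] s0 v by auto
    then show False using Sind by simp
  qed
  then have "card T \<le> K.rank B" using K.rank_ge_card_indpt[OF B Tsub] by simp
  then show ?thesis using rk cardT by simp
qed


lemma rank_mult_left:
  fixes A :: "'a::field mat"
  assumes A: "A \<in> carrier_mat n k" and B: "B \<in> carrier_mat k nc"
  shows "vec_space.rank n (A * B) \<le> vec_space.rank n A"
proof -
  interpret N: vec_space "TYPE('a)" n .
  have AB: "A * B \<in> carrier_mat n nc" using A B by auto
  define W where "W = N.span (set (cols A))"
  have Wsub: "subspace class_ring W N.V"
    unfolding W_def using N.span_is_subspace cols_dim[of A] A by auto
  have "set (cols (A * B)) \<subseteq> W"
  proof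
    fix x assume "x \<in> set (cols (A * B))"
    then obtain j where "j < length (cols (A * B))" "x = cols (A * B) ! j"
      by (auto simp: in_set_conv_nth)
    then have j: "j < nc" "x = A *\<^sub>v col B j" using AB col_mult2[OF A B] by auto
    have "col B j \<in> carrier_vec k" using B j by auto
    then have "x \<in> N.col_space A" using N.col_space_eq[OF A] j A by auto
    then show "x \<in> W" unfolding W_def N.col_space_def .
  qed
  then have sp: "N.span (set (cols (A * B))) \<subseteq> W"
    using N.span_is_subset Wsub unfolding subspace_def by blast
  have "subspace class_ring (N.span (set (cols (A * B)))) N.V"
    using N.span_is_subspace cols_dim[of "A * B"] A by auto
  then have subsp: "subspace class_ring (N.span (set (cols (A * B)))) (N.vs W)"
    using N.nested_subspaces[OF Wsub _ sp] by blast
  have fdW: "vectorspace.fin_dim class_ring (N.vs W)" unfolding W_def using N.fin_dim_span_cols A by blast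
  have fdAB: "vectorspace.fin_dim class_ring (N.span_vs (set (cols (A * B))))" using N.fin_dim_span_cols AB by blast
  have "N.rank (A * B) \<le> vectorspace.dim class_ring (N.vs W)" unfolding N.rank_def
    using vectorspace.subspace_dim[OF N.subspace_is_vs[OF Wsub] subsp fdW] fdAB by auto
  then show ?thesis unfolding N.rank_def W_def by simp
qed


lemma mult_entry:
  assumes "i < dim_row A" "j < dim_col B" "dim_col A = dim_row B"
  shows "(A * B) $$ (i,j) = (\<Sum>k<dim_col A. A $$ (i,k) * B $$ (k,j))"
  using assms by (simp add: scalar_prod_def lessThan_atLeast0)

lemma mult_entry':
  assumes "A \<in> carrier_mat nr n" "B \<in> carrier_mat n nc" "i < nr" "j < nc"
  shows "(A * B) $$ (i,j) = (\<Sum>k<n. A $$ (i,k) * B $$ (k,j))"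
  using mult_entry[of i A j B] assms by simp

lemma bit_add_self: "(r::bit) + r = 0"
  by (metis add_0 bit_2_eq_0 bit_not_zero_iff one_add_one)

lemma lift_rank:
  assumes L: "is_perm_lift P H Hh" and P: "P \<ge> 1"
  shows "rk Hh \<le> rk H + (P - 1) * dim_row H"
proof -
  define m where "m = dim_row H"
  define nn where "nn = dim_col H"
  have H: "H \<in> carrier_mat m nn" unfolding m_def nn_def by (rule carrier_matI) (rule refl)+
  have L': "Hh \<in> carrier_mat (P*m) (P*nn) \<and> (\<exists>\<sigma> :: nat \<Rightarrow> nat \<Rightarrow> nat \<Rightarrow> nat. \<forall>a<m. \<forall>b<nn. (H $$ (a,b) \<noteq> 0 \<longrightarrow> \<sigma> a b permutes {..<P}) \<and>
     (\<forall>r<P. \<forall>c<P. Hh $$ (a*P+r, b*P+c) = (if H $$ (a,b) = 0 then 0 else if \<sigma> a b r = c then 1 else 0)))"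
    using L unfolding is_perm_lift_def m_def nn_def .
  have Hh: "Hh \<in> carrier_mat (P*m) (P*nn)" using L' by (rule conjunct1)
  from conjunct2[OF L'] obtain \<sigma> where \<sigma>: "\<forall>a<m. \<forall>b<nn. (H $$ (a,b) \<noteq> 0 \<longrightarrow> \<sigma> a b permutes {..<P}) \<and>
     (\<forall>r<P. \<forall>c<P. Hh $$ (a*P+r, b*P+c) = (if H $$ (a,b) = 0 then 0 else if \<sigma> a b r = c then 1 else 0))"
    by (rule exE)
  have bs: "(\<Sum>s<P. Hh $$ (a*P+s, y)) = H $$ (a, y div P)" if a: "a < m" and y: "y < P*nn" for a y
  proof -
    define b where "b = y div P"
    define c where "c = y mod P"
    have y1: "y = b*P + c" by (simp add: b_def c_def)
    have y2: "b < nn" unfolding b_def using y by (metis less_mult_imp_div_less mult.commute)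
    have y3: "c < P" using P unfolding c_def by simp
    note y' = y1 y2 y3
    have "(\<Sum>s<P. Hh $$ (a*P+s, y)) = (\<Sum>s<P. if H $$ (a,b) = 0 then 0 else if \<sigma> a b s = c then 1 else 0)"
      using \<sigma> a y' by (intro sum.cong) auto
    also have "\<dots> = H $$ (a, b)"
    proof (cases "H $$ (a,b) = 0")
      case True then show ?thesis by simp
    next
      case False
      then have p: "\<sigma> a b permutes {..<P}" and h1: "H $$ (a,b) = 1" using \<sigma> a y' by auto
      have "(\<Sum>s<P. if H $$ (a,b) = 0 then 0 else if \<sigma> a b s = c then 1 else 0)
          = (\<Sum>s<P. if s = Hilbert_Choice.inv (\<sigma> a b) c then 1 else (0::bit))"
        using False permutes_inv_eq[OF p, of c] by (intro sum.cong refl) (metis (full_types))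
      also have "\<dots> = 1"
        using permutes_in_image[OF permutes_inv[OF p], of c] y' by (simp add: sum.delta')
      finally show ?thesis using h1 by simp
    qed
    finally show ?thesis unfolding b_def .
  qed
  define k where "k = P - 1"
  have Pk: "P = Suc k" using P by (simp add: k_def)
  define E where "E = mat (P*m) m (\<lambda>(x,a). if x div P = a \<and> x mod P = 0 then 1 else (0::bit))"
  define F where "F = mat nn (P*nn) (\<lambda>(b,y). if y div P = b then 1 else (0::bit))"
  define K where "K = mat (k*m) (P*nn) (\<lambda>(i,y). Hh $$ ((i div k)*P + i mod k + 1, y))"
  define G where "G = mat (P*m) (k*m) (\<lambda>(x,i). if x div P = i div k \<and> (x mod P = 0 \<or> x mod P = i mod k + 1) then 1 else (0::bit))"
  have E: "E \<in> carrier_mat (P*m) m" and F: "F \<in> carrier_mat nn (P*nn)"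
    and K: "K \<in> carrier_mat (k*m) (P*nn)" and G: "G \<in> carrier_mat (P*m) (k*m)"
    by (simp_all add: E_def F_def K_def G_def)
  have EH: "E * H \<in> carrier_mat (P*m) nn" using E H by auto
  have EHF: "E * H * F \<in> carrier_mat (P*m) (P*nn)" using EH F by auto
  have GK: "G * K \<in> carrier_mat (P*m) (P*nn)" using G K by auto
  have eq: "Hh = E * H * F + G * K"
  proof (rule eq_matI)
    show "dim_row Hh = dim_row (E * H * F + G * K)" "dim_col Hh = dim_col (E * H * F + G * K)"
      using Hh EHF GK by auto
    fix x y assume "x < dim_row (E * H * F + G * K)" "y < dim_col (E * H * F + G * K)"
    then have x: "x < P*m" and y: "y < P*nn" using EHF GK by auto
    define a where "a = x div P"
    have a1: "a < m" unfolding a_def using x by (metis less_mult_imp_div_less mult.commute)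
    have a2: "x = a*P + x mod P" by (simp add: a_def)
    have a3: "x mod P < P" using P by simp
    note a = a1 a2 a3
    have eh: "(E * H) $$ (x, b) = (if x mod P = 0 then H $$ (a, b) else 0)" if b: "b < nn" for b
    proof -
      have "(E * H) $$ (x, b) = (\<Sum>a'<m. E $$ (x,a') * H $$ (a',b))"
        using mult_entry[of x E b H] E H x b by simp
      also have "\<dots> = (\<Sum>a'<m. if a' = a then (if x mod P = 0 then H $$ (a, b) else 0) else 0)"
        using x by (intro sum.cong) (auto simp: E_def a_def)
      also have "\<dots> = (if x mod P = 0 then H $$ (a, b) else 0)" using a by (simp add: sum.delta')
      finally show ?thesis .
    qed
    have ehf: "(E * H * F) $$ (x,y) = (if x mod P = 0 then H $$ (a, y div P) else 0)"
    proof -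
      have yd: "y div P < nn" using y by (metis less_mult_imp_div_less mult.commute)
      have "(E * H * F) $$ (x,y) = (\<Sum>b<nn. (E * H) $$ (x,b) * F $$ (b,y))"
        by (rule mult_entry'[OF EH F x y])
      also have "\<dots> = (\<Sum>b<nn. if b = y div P then (if x mod P = 0 then H $$ (a, y div P) else 0) else 0)"
        using y eh by (intro sum.cong) (auto simp: F_def)
      also have "\<dots> = (if x mod P = 0 then H $$ (a, y div P) else 0)" using yd by (simp add: sum.delta')
      finally show ?thesis .
    qed
    have gk0: "(G * K) $$ (x,y) = (\<Sum>s<k. if x mod P = 0 \<or> x mod P = s + 1 then Hh $$ (a*P+s+1, y) else 0)"
    proof -
      have "(G * K) $$ (x,y) = (\<Sum>i<k*m. G $$ (x,i) * K $$ (i,y))"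
        using mult_entry[of x G y K] G K x y by simp
      also have "\<dots> = (\<Sum>a'<m. \<Sum>s<k. G $$ (x,a'*k+s) * K $$ (a'*k+s,y))"
        by (rule sum_blocks)
      also have "\<dots> = (\<Sum>a'<m. \<Sum>s<k. if a' = a then (if x mod P = 0 \<or> x mod P = s + 1 then Hh $$ (a*P+s+1, y) else 0) else 0)"
      proof (intro sum.cong refl)
        fix a' s assume a': "a' \<in> {..<m}" and s: "s \<in> {..<k}"
        have lt: "a'*k+s < k*m"
        proof -
          have "a'*k+s < a'*k + k" using s by simp
          also have "\<dots> = (a'+1)*k" by simp
          also have "\<dots> \<le> m*k" using a' by (intro mult_right_mono) auto
          finally show ?thesis by (simp add: mult.commute)
        qed
        have dm: "(a'*k+s) div k = a'" "(a'*k+s) mod k = s" using s by auto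
        show "G $$ (x,a'*k+s) * K $$ (a'*k+s,y) = (if a' = a then (if x mod P = 0 \<or> x mod P = s + 1 then Hh $$ (a*P+s+1, y) else 0) else 0)"
          using lt x y dm by (auto simp: G_def K_def a_def)
      qed
      also have "\<dots> = (\<Sum>a'<m. if a' = a then (\<Sum>s<k. if x mod P = 0 \<or> x mod P = s + 1 then Hh $$ (a*P+s+1, y) else 0) else 0)"
        by (intro sum.cong refl) auto
      also have "\<dots> = (\<Sum>s<k. if x mod P = 0 \<or> x mod P = s + 1 then Hh $$ (a*P+s+1, y) else 0)"
        using a by simp
      finally show ?thesis .
    qed
    have sumP: "(\<Sum>s<P. Hh $$ (a*P+s, y)) = Hh $$ (a*P, y) + (\<Sum>s<k. Hh $$ (a*P+s+1, y))"
    proof -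
      have gen: "(\<Sum>s<P. f s) = f 0 + (\<Sum>s<k. f (Suc s))" for f :: "nat \<Rightarrow> bit"
        unfolding Pk by (rule sum.lessThan_Suc_shift)
      show ?thesis using gen[of "\<lambda>s. Hh $$ (a*P+s, y)"] by simp
    qed
    have "(E * H * F + G * K) $$ (x,y) = (E * H * F) $$ (x,y) + (G * K) $$ (x,y)"
      using x y G K by simp
    also have "\<dots> = Hh $$ (x,y)"
    proof (cases "x mod P = 0")
      case True
      have xa: "x = a*P" using a True by simp
      define R where "R = (\<Sum>s<k. Hh $$ (a*P+s+1, y))"
      have h: "H $$ (a, y div P) = Hh $$ (a*P, y) + R"
        unfolding R_def using bs[OF a(1) y, symmetric] sumP by (rule trans)
      have "(E * H * F) $$ (x,y) + (G * K) $$ (x,y) = H $$ (a, y div P) + R"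
        unfolding R_def by (simp only: ehf gk0 True if_True simp_thms)
      also have "\<dots> = Hh $$ (a*P, y) + (R + R)" unfolding h by (simp only: add.assoc)
      also have "\<dots> = Hh $$ (x, y)" unfolding xa by (simp only: bit_add_self add_0_right)
      finally show ?thesis .
    next
      case False
      define r where "r = x mod P - 1"
      have r: "r < k" "x mod P = r + 1" using False a(3) by (auto simp: r_def k_def)
      have "(G * K) $$ (x,y) = (\<Sum>s<k. if s = r then Hh $$ (a*P+r+1, y) else 0)"
        unfolding gk0 using False r by (intro sum.cong) auto
      also have "\<dots> = Hh $$ (x, y)" using r a by (simp add: sum.delta')
      finally show ?thesis using ehf False by simp
    qed
    finally show "Hh $$ (x,y) = (E * H * F + G * K) $$ (x,y)" by simp
  qed
  have "rk Hh = vec_space.rank (P*m) Hh" unfolding rk_def using Hh by simp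
  also have "\<dots> \<le> vec_space.rank (P*m) (E * H * F) + vec_space.rank (P*m) (G * K)"
    unfolding eq using vec_space.rank_subadditive[OF EHF GK] .
  also have "vec_space.rank (P*m) (E * H * F) \<le> vec_space.rank (P*m) (E * H)"
    using rank_mult_left[OF EH F] .
  also have "vec_space.rank (P*m) (E * H) \<le> vec_space.rank m H"
    using rank_mult_right[OF E H] .
  also have "vec_space.rank (P*m) (G * K) \<le> vec_space.rank (P*m) G"
    using rank_mult_left[OF G K] .
  also have "vec_space.rank (P*m) G \<le> k * m"
    using vec_space.rank_le_nc[OF G] .
  finally show ?thesis unfolding rk_def m_def k_def by simp
qed


theorem mainTheorem5:
  fixes HX HZ HXh HZh :: "bit mat" and mX mZ n P :: nat
  assumes "HX \<in> carrier_mat mX n" and "HZ \<in> carrier_mat mZ n"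
    and "P \<ge> 1"
    and "is_perm_lift P HX HXh" and "is_perm_lift P HZ HZh"
    and "HXh * transpose_mat HZh = 0\<^sub>m (P * mX) (P * mZ)"
  shows "int (P * n) - int (rk HXh) - int (rk HZh)
           \<ge> (int n - int (rk HX) - int (rk HZ))
              + (int P - 1) * (int n - int mX - int mZ)"
proof -
  have dX: "dim_row HX = mX" using assms(1) by auto
  have dZ: "dim_row HZ = mZ" using assms(2) by auto
  have 1: "rk HXh \<le> rk HX + (P - 1) * mX" using lift_rank[OF assms(4) assms(3)] dX by simp
  have 2: "rk HZh \<le> rk HZ + (P - 1) * mZ" using lift_rank[OF assms(5) assms(3)] dZ by simp
  define q where "q = int P - 1"
  have q: "int (P - 1) = q" using assms(3) unfolding q_def by (simp add: of_nat_diff)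
  have i1: "int (rk HXh) \<le> int (rk HX) + q * int mX"
    using 1 q by (metis of_nat_add of_nat_le_iff of_nat_mult)
  have i2: "int (rk HZh) \<le> int (rk HZ) + q * int mZ"
    using 2 q by (metis of_nat_add of_nat_le_iff of_nat_mult)
  have Pn: "int (P * n) = int n + q * int n" unfolding q_def by (simp add: algebra_simps)
  have e: "q * (int n - int mX - int mZ) = q * int n - q * int mX - q * int mZ"
    by (simp add: right_diff_distrib)
  show ?thesis unfolding q_def[symmetric] e Pn using i1 i2 by linarith
qed

end
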